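(* Let $L$ be a multisorted algebra in the positive existential signature satisfying axioms (1), (2), (3), (4), (8). Let $r\neq s$ be two elements of the same sort of $L$. Then there is a set $W$ and an almost morphism $\varphi\colon L\to A(W)$ into the positive existential algebra of $W$ such that $\varphi(r)\neq\varphi(s)$.
   Context: The Boolean prime ideal theorem is assumed. Signature. There is a sort $n$ for each $n\ge0$. For every function $\alpha\colon\{1,\dots,n\}\to\{1,\dots,k\}$ there is a unary function symbol ("substitution") $\alpha\colon n\to k$ (argument of sort $n$, value of sort $k$). Each sort has $0,1,\vee,\wedge$; for each $n$ there is $\exists\colon n+1\to n$ (positive existential signature). For $\alpha\colon k\to n$, $\beta\colon n\to m$, $\beta\circ\alpha$ is the substitution symbol of the composite function; $\mathrm{id}$ is the identity substitution. The associated cylindrification of $\exists\colon n+1\to n$ is $c\colon n\to n+1$, $c(i)=i$. For a set $W$: $\alpha^{\mathrm{tuple}}(x_1,\dots,x_k)=(x_{\alpha(1)},\dots,x_{\alpha(n)})$, $\alpha^{\mathrm{relation}}(r)=\{\bar x\in W^k:\alpha^{\mathrm{tuple}}(\bar x)\in r\}$. The positive existential algebra $A(W)$ interprets sort $n$ as $\mathcal P(W^n)$, $\alpha$ as $\alpha^{\mathrm{relation}}$, $0,1,\vee,\wedge$ as $\emptyset,W^n,\cup,\cap$, and $\exists(r)=\{\bar x:\exists y\,(\bar x,y)\in r\}$. An almost morphism $\varphi\colon L\to A(W)$ is a sort-preserving family of maps commuting with all substitutions and with $0,1,\vee,\wedge$, and satisfying $\exists(\varphi(r))\subseteq\varphi(\exists(r))$.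 Axioms: (1) each sort is a bounded distributive lattice; (2) substitutions preserve $0,1,\vee,\wedge$; (3) $(\beta\circ\alpha)(r)=\beta(\alpha(r))$; (4) $\mathrm{id}(r)=r$; (8) $r\le c(\exists(r))$ (where $x\le y$ means $x=x\wedge y$). *)

theory Defs
  imports "HOL-Library.FuncSet"
begin

text \<open>Index sets {1..n} of the paper are represented as {0..<n}; a substitution
  symbol alpha : n -> k is an extensional function from {0..<n} to {0..<k}.
  ex L n : sort (n+1) -> sort n;  sb L n k alpha : sort n -> sort k.\<close>

record 'a pe_alg =
  car  :: "nat \<Rightarrow> 'a set"
  bot  :: "nat \<Rightarrow> 'a"
  top  :: "nat \<Rightarrow> 'a"
  join :: "nat \<Rightarrow> 'a \<Rightarrow> 'a \<Rightarrow> 'a"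
  meet :: "nat \<Rightarrow> 'a \<Rightarrow> 'a \<Rightarrow> 'a"
  ex   :: "nat \<Rightarrow> 'a \<Rightarrow> 'a"
  sb   :: "nat \<Rightarrow> nat \<Rightarrow> (nat \<Rightarrow> nat) \<Rightarrow> 'a \<Rightarrow> 'a"

abbreviation substs :: "nat \<Rightarrow> nat \<Rightarrow> (nat \<Rightarrow> nat) set" where
  "substs n k \<equiv> {0..<n} \<rightarrow>\<^sub>E {0..<k}"

definition pe_closed :: "'a pe_alg \<Rightarrow> bool" where
  "pe_closed L \<longleftrightarrow>
     (\<forall>n. bot L n \<in> car L n \<and> top L n \<in> car L n) \<and>
     (\<forall>n. \<forall>x\<in>car L n. \<forall>y\<in>car L n. join L n x y \<in> car L n \<and> meet L n x y \<in> car L n) \<and>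
     (\<forall>n. \<forall>x\<in>car L (Suc n). ex L n x \<in> car L n) \<and>
     (\<forall>n k. \<forall>\<alpha>\<in>substs n k. \<forall>x\<in>car L n. sb L n k \<alpha> x \<in> car L k)"

definition ax1 :: "'a pe_alg \<Rightarrow> bool" where
  "ax1 L \<longleftrightarrow> (\<forall>n. \<forall>x\<in>car L n. \<forall>y\<in>car L n. \<forall>z\<in>car L n.
      join L n (join L n x y) z = join L n x (join L n y z) \<and>
      meet L n (meet L n x y) z = meet L n x (meet L n y z) \<and>
      join L n x y = join L n y x \<and>
      meet L n x y = meet L n y x \<and>
      join L n x (meet L n x y) = x \<and>
      meet L n x (join L n x y) = x \<and>
      meet L n x (join L n y z) = join L n (meet L n x y) (meet L n x z) \<and>
      join L n x (bot L n) = x \<and>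
      meet L n x (top L n) = x)"

definition ax2 :: "'a pe_alg \<Rightarrow> bool" where
  "ax2 L \<longleftrightarrow> (\<forall>n k. \<forall>\<alpha>\<in>substs n k.
      sb L n k \<alpha> (bot L n) = bot L k \<and>
      sb L n k \<alpha> (top L n) = top L k \<and>
      (\<forall>x\<in>car L n. \<forall>y\<in>car L n.
         sb L n k \<alpha> (join L n x y) = join L k (sb L n k \<alpha> x) (sb L n k \<alpha> y) \<and>
         sb L n k \<alpha> (meet L n x y) = meet L k (sb L n k \<alpha> x) (sb L n k \<alpha> y)))"

definition ax3 :: "'a pe_alg \<Rightarrow> bool" where
  "ax3 L \<longleftrightarrow> (\<forall>k n m. \<forall>\<alpha>\<in>substs k n. \<forall>\<beta>\<in>substs n m. \<forall>r\<in>car L k.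
      sb L k m (compose {0..<k} \<beta> \<alpha>) r = sb L n m \<beta> (sb L k n \<alpha> r))"

definition ax4 :: "'a pe_alg \<Rightarrow> bool" where
  "ax4 L \<longleftrightarrow> (\<forall>n. \<forall>r\<in>car L n. sb L n n (restrict id {0..<n}) r = r)"

definition ax8 :: "'a pe_alg \<Rightarrow> bool" where
  "ax8 L \<longleftrightarrow> (\<forall>n. \<forall>r\<in>car L (Suc n).
      r = meet L (Suc n) r (sb L n (Suc n) (restrict id {0..<n}) (ex L n r)))"

text \<open>The positive existential algebra A(W): sort n is the powerset of W^n,
  n-tuples being lists of length n over W.\<close>
definition tuples :: "'w set \<Rightarrow> nat \<Rightarrow> 'w list set" where
  "tuples W n = {xs. length xs = n \<and> set xs \<subseteq> W}"

definition subst_tuple :: "nat \<Rightarrow> (nat \<Rightarrow> nat) \<Rightarrow> 'w list \<Rightarrow> 'w list" where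
  "subst_tuple n \<alpha> xs = map (\<lambda>i. xs ! \<alpha> i) [0..<n]"

definition subst_rel :: "'w set \<Rightarrow> nat \<Rightarrow> nat \<Rightarrow> (nat \<Rightarrow> nat) \<Rightarrow> 'w list set \<Rightarrow> 'w list set" where
  "subst_rel W n k \<alpha> r = {xs \<in> tuples W k. subst_tuple n \<alpha> xs \<in> r}"

definition ex_rel :: "'w set \<Rightarrow> nat \<Rightarrow> 'w list set \<Rightarrow> 'w list set" where
  "ex_rel W n r = {xs \<in> tuples W n. \<exists>y. xs @ [y] \<in> r}"

definition almost_morphism :: "'a pe_alg \<Rightarrow> 'w set \<Rightarrow> (nat \<Rightarrow> 'a \<Rightarrow> 'w list set) \<Rightarrow> bool" where
  "almost_morphism L W \<phi> \<longleftrightarrow>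
     (\<forall>n. \<forall>r\<in>car L n. \<phi> n r \<subseteq> tuples W n) \<and>
     (\<forall>n k. \<forall>\<alpha>\<in>substs n k. \<forall>r\<in>car L n. \<phi> k (sb L n k \<alpha> r) = subst_rel W n k \<alpha> (\<phi> n r)) \<and>
     (\<forall>n. \<phi> n (bot L n) = {} \<and> \<phi> n (top L n) = tuples W n) \<and>
     (\<forall>n. \<forall>r\<in>car L n. \<forall>s\<in>car L n.
        \<phi> n (join L n r s) = \<phi> n r \<union> \<phi> n s \<and> \<phi> n (meet L n r s) = \<phi> n r \<inter> \<phi> n s) \<and>
     (\<forall>n. \<forall>r\<in>car L (Suc n). ex_rel W n (\<phi> (Suc n) r) \<subseteq> \<phi> n (ex L n r))"

end

theory Submission
  imports Defs
begin


locale dlat =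
  fixes C :: "'a set" and j m :: "'a \<Rightarrow> 'a \<Rightarrow> 'a" and b t :: 'a
  assumes cl: "b \<in> C" "t \<in> C" "\<And>x y. x \<in> C \<Longrightarrow> y \<in> C \<Longrightarrow> j x y \<in> C"
      "\<And>x y. x \<in> C \<Longrightarrow> y \<in> C \<Longrightarrow> m x y \<in> C"
    and ax: "\<And>x y z. x \<in> C \<Longrightarrow> y \<in> C \<Longrightarrow> z \<in> C \<Longrightarrow>
      j (j x y) z = j x (j y z) \<and> m (m x y) z = m x (m y z) \<and> j x y = j y x \<and> m x y = m y x \<and>
      j x (m x y) = x \<and> m x (j x y) = x \<and> m x (j y z) = j (m x y) (m x z) \<and> j x b = x \<and> m x t = x"
begin

definition le where "le x y \<longleftrightarrow> x = m x y"

lemma massoc: "x \<in> C \<Longrightarrow> y \<in> C \<Longrightarrow> z \<in> C \<Longrightarrow> m (m x y) z = m x (m y z)" using ax by blast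
lemma mcomm: "x \<in> C \<Longrightarrow> y \<in> C \<Longrightarrow> m x y = m y x" using ax[of x y x] by blast
lemma jcomm: "x \<in> C \<Longrightarrow> y \<in> C \<Longrightarrow> j x y = j y x" using ax[of x y x] by blast
lemma abs1: "x \<in> C \<Longrightarrow> y \<in> C \<Longrightarrow> j x (m x y) = x" using ax[of x y x] by blast
lemma abs2: "x \<in> C \<Longrightarrow> y \<in> C \<Longrightarrow> m x (j x y) = x" using ax[of x y x] by blast
lemma distr: "x \<in> C \<Longrightarrow> y \<in> C \<Longrightarrow> z \<in> C \<Longrightarrow> m x (j y z) = j (m x y) (m x z)" using ax by blast
lemma jbot: "x \<in> C \<Longrightarrow> j x b = x" using ax[of x x x] by blast
lemma mtop: "x \<in> C \<Longrightarrow> m x t = x" using ax[of x x x] by blast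

lemma midem: "x \<in> C \<Longrightarrow> m x x = x"
proof -
  assume x: "x \<in> C"
  have "j x (m x x) = x" using abs1[OF x x] .
  hence "m x x = m x (j x (m x x))" by simp
  also have "\<dots> = x" using abs2[OF x cl(4)[OF x x]] .
  finally show ?thesis .
qed

lemma le_refl: "x \<in> C \<Longrightarrow> le x x" by (simp add: le_def midem)
lemma le_trans: "x \<in> C \<Longrightarrow> y \<in> C \<Longrightarrow> z \<in> C \<Longrightarrow> le x y \<Longrightarrow> le y z \<Longrightarrow> le x z"
  unfolding le_def by (metis massoc)
lemma le_antisym: "x \<in> C \<Longrightarrow> y \<in> C \<Longrightarrow> le x y \<Longrightarrow> le y x \<Longrightarrow> x = y"
  unfolding le_def by (metis mcomm)
lemma le_m1: "x \<in> C \<Longrightarrow> y \<in> C \<Longrightarrow> le (m x y) x"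
  unfolding le_def by (metis massoc mcomm midem)
lemma le_m2: "x \<in> C \<Longrightarrow> y \<in> C \<Longrightarrow> le (m x y) y"
  by (metis le_m1 mcomm)
lemma le_mI: "x \<in> C \<Longrightarrow> y \<in> C \<Longrightarrow> z \<in> C \<Longrightarrow> le x y \<Longrightarrow> le x z \<Longrightarrow> le x (m y z)"
  unfolding le_def by (metis massoc)
lemma le_bot: "x \<in> C \<Longrightarrow> le b x"
  unfolding le_def by (metis abs2 cl(1) jbot jcomm)
lemma le_top: "x \<in> C \<Longrightarrow> le x t"
  unfolding le_def by (simp add: mtop)
lemma le_jI: "x \<in> C \<Longrightarrow> y \<in> C \<Longrightarrow> z \<in> C \<Longrightarrow> le x z \<Longrightarrow> le y z \<Longrightarrow> le (j x y) z"
proof -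
  assume xyz: "x \<in> C" "y \<in> C" "z \<in> C" and h: "le x z" "le y z"
  have "m (j x y) z = m z (j x y)" using xyz cl by (simp add: mcomm)
  also have "\<dots> = j (m z x) (m z y)" using xyz by (simp add: distr)
  also have "\<dots> = j x y" using h xyz unfolding le_def by (simp add: mcomm)
  finally show ?thesis unfolding le_def by simp
qed
lemma le_mono: "a \<in> C \<Longrightarrow> a' \<in> C \<Longrightarrow> c \<in> C \<Longrightarrow> c' \<in> C \<Longrightarrow> le a a' \<Longrightarrow> le c c' \<Longrightarrow> le (m a c) (m a' c')"
  by (meson cl(4) le_m1 le_m2 le_mI le_trans)

definition filt where "filt F \<longleftrightarrow> F \<subseteq> C \<and> (\<forall>x\<in>F. \<forall>y\<in>F. m x y \<in> F) \<and> (\<forall>x\<in>F. \<forall>y\<in>C. le x y \<longrightarrow> y \<in> F)"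

lemma prime_filter:
  assumes r: "r \<in> C" and s: "s \<in> C" and nle: "\<not> le r s"
  shows "\<exists>P. filt P \<and> r \<in> P \<and> s \<notin> P \<and> (\<forall>x\<in>C. \<forall>y\<in>C. j x y \<in> P \<longrightarrow> x \<in> P \<or> y \<in> P)"
proof -
  define S where "S = {F. filt F \<and> r \<in> F \<and> s \<notin> F}"
  define U where "U = {x\<in>C. le r x}"
  have U: "U \<in> S" unfolding S_def U_def filt_def using r s nle
    by (auto intro: le_refl le_mI cl le_trans)
  have "\<exists>M\<in>S. \<forall>X\<in>S. M \<subseteq> X \<longrightarrow> X = M"
  proof (rule subset_Zorn_nonempty)
    show "S \<noteq> {}" using U by auto
  next
    fix Ch assume ne: "Ch \<noteq> {}" and ch: "subset.chain S Ch"
    hence sub: "Ch \<subseteq> S" and cmp: "\<And>X Y. X \<in> Ch \<Longrightarrow> Y \<in> Ch \<Longrightarrow> X \<subseteq> Y \<or> Y \<subseteq> X"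
      by (auto simp: subset.chain_def)
    have "filt (\<Union>Ch)" unfolding filt_def
    proof (intro conjI ballI impI)
      show "\<Union>Ch \<subseteq> C" using sub by (auto simp: S_def filt_def)
    next
      fix x y assume "x \<in> \<Union>Ch" "y \<in> \<Union>Ch"
      then obtain X Y where X: "X \<in> Ch" "x \<in> X" and Y: "Y \<in> Ch" "y \<in> Y" by auto
      show "m x y \<in> \<Union>Ch"
      proof (cases "X \<subseteq> Y")
        case True hence "x \<in> Y" using X by blast
        hence "m x y \<in> Y" using Y sub by (auto simp: S_def filt_def)
        thus ?thesis using Y by blast
      next
        case False hence "Y \<subseteq> X" using cmp X Y by blast
        hence "y \<in> X" using Y by blast
        hence "m x y \<in> X" using X sub by (auto simp: S_def filt_def)
        thus ?thesis using X by blast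
      qed
    next
      fix x y assume "x \<in> \<Union>Ch" "y \<in> C" "le x y"
      thus "y \<in> \<Union>Ch" using sub by (auto simp: S_def filt_def)
    qed
    thus "\<Union>Ch \<in> S" using ne sub by (auto simp: S_def)
  qed
  then obtain P where P: "P \<in> S" and max: "\<And>X. X \<in> S \<Longrightarrow> P \<subseteq> X \<Longrightarrow> X = P" by blast
  have fP: "filt P" and rP: "r \<in> P" and sP: "s \<notin> P" using P by (auto simp: S_def)
  have PC: "P \<subseteq> C" and Pm: "\<And>x y. x \<in> P \<Longrightarrow> y \<in> P \<Longrightarrow> m x y \<in> P"
    and Pup: "\<And>x y. x \<in> P \<Longrightarrow> y \<in> C \<Longrightarrow> le x y \<Longrightarrow> y \<in> P" using fP by (auto simp: filt_def)
  have gen: "\<exists>f\<in>P. le (m f a) s" if a: "a \<in> C" "a \<notin> P" for a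
  proof -
    define G where "G = {x\<in>C. \<exists>f\<in>P. le (m f a) x}"
    have "filt G" unfolding filt_def
    proof (intro conjI ballI impI)
      show "G \<subseteq> C" by (auto simp: G_def)
    next
      fix x y assume "x \<in> G" "y \<in> G"
      then obtain f g where x: "x \<in> C" "f \<in> P" "le (m f a) x" and y: "y \<in> C" "g \<in> P" "le (m g a) y"
        by (auto simp: G_def)
      have fg: "f \<in> C" "g \<in> C" using x y PC by auto
      have "le (m (m f g) a) (m x y)"
      proof (rule le_mI)
        show "le (m (m f g) a) x"
          by (rule le_trans[of _ "m f a"]) (use fg a x cl in \<open>auto intro: le_mono le_m1 le_refl\<close>)
        show "le (m (m f g) a) y"
          by (rule le_trans[of _ "m g a"]) (use fg a y cl in \<open>auto intro: le_mono le_m2 le_refl\<close>)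
      qed (use fg a x y cl in auto)
      thus "m x y \<in> G" using x y Pm by (auto simp: G_def intro!: cl bexI[of _ "m f g"])
    next
      fix x y assume "x \<in> G" "y \<in> C" "le x y"
      then obtain f where "x \<in> C" "f \<in> P" "le (m f a) x" by (auto simp: G_def)
      thus "y \<in> G" using \<open>y \<in> C\<close> \<open>le x y\<close> PC a unfolding G_def
        by (auto intro: le_trans cl)
    qed
    moreover have "P \<subseteq> G" unfolding G_def using PC a by (auto intro!: le_m1)
    moreover have "a \<in> G" unfolding G_def using rP PC a by (auto intro!: le_m2)
    ultimately have "G \<notin> S" using max a by blast
    hence "s \<in> G" using \<open>filt G\<close> \<open>P \<subseteq> G\<close> rP by (auto simp: S_def)
    thus ?thesis by (auto simp: G_def)
  qed
  have "x \<in> P \<or> y \<in> P" if xy: "x \<in> C" "y \<in> C" "j x y \<in> P" for x y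
  proof (rule ccontr)
    assume "\<not> (x \<in> P \<or> y \<in> P)"
    then obtain f g where f: "f \<in> P" "le (m f x) s" and g: "g \<in> P" "le (m g y) s"
      using gen xy by blast
    have fg: "f \<in> C" "g \<in> C" using f g PC by auto
    define h where "h = m f g"
    have h: "h \<in> P" "h \<in> C" using Pm f g fg cl by (auto simp: h_def)
    have 1: "le (m h x) s" by (rule le_trans[OF _ _ _ _ f(2)])
        (use h fg xy s cl in \<open>auto simp: h_def intro: le_mono le_m1 le_refl\<close>)
    have 2: "le (m h y) s" by (rule le_trans[OF _ _ _ _ g(2)])
        (use h fg xy s cl in \<open>auto simp: h_def intro: le_mono le_m2 le_refl\<close>)
    have "le (j (m h x) (m h y)) s" using 1 2 h xy s cl by (auto intro: le_jI)
    hence "le (m h (j x y)) s" using h xy by (simp add: distr)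
    moreover have "m h (j x y) \<in> P" using Pm h xy by auto
    ultimately show False using Pup s sP by blast
  qed
  thus ?thesis using fP rP sP by blast
qed

end


definition enc :: "nat \<Rightarrow> (nat \<times> 'a) set" where "enc i = {i} \<times> UNIV"
definition dec :: "(nat \<times> 'a) set \<Rightarrow> nat" where "dec w = fst (SOME p. p \<in> w)"
lemma dec_enc[simp]: "dec (enc i) = i"
  unfolding dec_def enc_def by (metis (mono_tags, lifting) SigmaE UNIV_I mem_Sigma_iff singletonD singletonI someI_ex fst_conv)

definition al :: "nat \<Rightarrow> (nat \<times> 'a) set list \<Rightarrow> nat \<Rightarrow> nat" where
  "al k xs = restrict (\<lambda>i. dec (xs ! i)) {0..<k}"


lemma al_in: assumes "xs \<in> tuples (enc ` {0..<n}) k" shows "al k xs \<in> substs k n"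
proof -
  have "\<And>i. i < k \<Longrightarrow> dec (xs ! i) < n"
  proof -
    fix i assume "i < k"
    hence "xs ! i \<in> set xs" using assms by (auto simp: tuples_def)
    hence "xs ! i \<in> enc ` {0..<n}" using assms by (auto simp: tuples_def)
    thus "dec (xs ! i) < n" by auto
  qed
  thus ?thesis by (auto simp: al_def)
qed

lemma main_aux:
  fixes L :: "'a pe_alg" and n :: nat and r s :: 'a
  assumes cl: "pe_closed L" and a1: "ax1 L" and a2: "ax2 L" and a3: "ax3 L" and a4: "ax4 L" and a8: "ax8 L"
    and r: "r \<in> car L n" and s: "s \<in> car L n" and nle: "r \<noteq> meet L n r s"
  shows "\<exists>(W :: (nat \<times> 'a) set set) (\<phi> :: nat \<Rightarrow> 'a \<Rightarrow> (nat \<times> 'a) set list set).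
           almost_morphism L W \<phi> \<and> \<phi> n r \<noteq> \<phi> n s"
proof -
  interpret D: dlat "car L n" "join L n" "meet L n" "bot L n" "top L n"
    using cl a1 unfolding pe_closed_def ax1_def by unfold_locales blast+
  obtain P where fP: "D.filt P" and rP: "r \<in> P" and sP: "s \<notin> P"
    and pr: "\<And>x y. x \<in> car L n \<Longrightarrow> y \<in> car L n \<Longrightarrow> join L n x y \<in> P \<Longrightarrow> x \<in> P \<or> y \<in> P"
    using D.prime_filter[OF r s] nle unfolding D.le_def by blast
  have PC: "P \<subseteq> car L n" and Pm: "\<And>x y. x \<in> P \<Longrightarrow> y \<in> P \<Longrightarrow> meet L n x y \<in> P"
    and Pup: "\<And>x y. x \<in> P \<Longrightarrow> y \<in> car L n \<Longrightarrow> D.le x y \<Longrightarrow> y \<in> P" using fP by (auto simp: D.filt_def)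
  have botP: "bot L n \<notin> P" using Pup D.le_bot s sP by blast
  have topP: "top L n \<in> P" using Pup D.le_top r rP PC D.cl by blast
  have Pmeet: "x \<in> car L n \<Longrightarrow> y \<in> car L n \<Longrightarrow> meet L n x y \<in> P \<longleftrightarrow> x \<in> P \<and> y \<in> P" for x y
    using Pm Pup D.le_m1 D.le_m2 D.cl by blast
  have Pjoin: "x \<in> car L n \<Longrightarrow> y \<in> car L n \<Longrightarrow> join L n x y \<in> P \<longleftrightarrow> x \<in> P \<or> y \<in> P" for x y
  proof -
    assume xy: "x \<in> car L n" "y \<in> car L n"
    have "D.le x (join L n x y)" unfolding D.le_def using D.abs2 xy by simp
    moreover have "D.le y (join L n x y)" unfolding D.le_def using D.abs2[OF xy(2,1)] D.jcomm[OF xy] by simp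
    ultimately show ?thesis using pr xy Pup D.cl by blast
  qed
  have sbc: "\<And>k k' \<alpha> x. \<alpha> \<in> substs k k' \<Longrightarrow> x \<in> car L k \<Longrightarrow> sb L k k' \<alpha> x \<in> car L k'"
    using cl unfolding pe_closed_def by blast
  have clj: "\<And>k x y. x \<in> car L k \<Longrightarrow> y \<in> car L k \<Longrightarrow> join L k x y \<in> car L k \<and> meet L k x y \<in> car L k"
    using cl unfolding pe_closed_def by blast
  define W :: "(nat \<times> 'a) set set" where "W = enc ` {0..<n}"
  define \<phi> :: "nat \<Rightarrow> 'a \<Rightarrow> (nat \<times> 'a) set list set" where
    "\<phi> k x = {xs \<in> tuples W k. sb L k n (al k xs) x \<in> P}" for k x
  have S: "\<phi> k (sb L k' k \<alpha> x) = subst_rel W k' k \<alpha> (\<phi> k' x)"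
    if \<alpha>: "\<alpha> \<in> substs k' k" and x: "x \<in> car L k'" for k k' \<alpha> x
  proof -
    have "xs \<in> \<phi> k (sb L k' k \<alpha> x) \<longleftrightarrow> xs \<in> subst_rel W k' k \<alpha> (\<phi> k' x)" for xs
    proof (cases "xs \<in> tuples W k")
      case False thus ?thesis by (simp add: \<phi>_def subst_rel_def)
    next
      case True
      have al: "al k xs \<in> substs k n" using al_in True W_def by blast
      have st: "subst_tuple k' \<alpha> xs \<in> tuples W k'"
        using True \<alpha> by (auto simp: tuples_def subst_tuple_def PiE_def Pi_def)
      have comp: "al k' (subst_tuple k' \<alpha> xs) = compose {0..<k'} (al k xs) \<alpha>"
        using \<alpha> by (auto simp: al_def compose_def subst_tuple_def PiE_def Pi_def)
      have "sb L k' n (compose {0..<k'} (al k xs) \<alpha>) x = sb L k n (al k xs) (sb L k' k \<alpha> x)"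
        using a3 \<alpha> al x unfolding ax3_def by blast
      thus ?thesis using True st comp by (simp add: \<phi>_def subst_rel_def)
    qed
    thus ?thesis by blast
  qed
  have J: "\<phi> k (join L k x y) = \<phi> k x \<union> \<phi> k y \<and> \<phi> k (meet L k x y) = \<phi> k x \<inter> \<phi> k y"
    if x: "x \<in> car L k" and y: "y \<in> car L k" for k x y
  proof -
    have "xs \<in> \<phi> k (join L k x y) \<longleftrightarrow> xs \<in> \<phi> k x \<union> \<phi> k y" for xs
    proof (cases "xs \<in> tuples W k")
      case True
      have al: "al k xs \<in> substs k n" using al_in True W_def by blast
      have "sb L k n (al k xs) (join L k x y) = join L n (sb L k n (al k xs) x) (sb L k n (al k xs) y)"
        using a2 al x y unfolding ax2_def by blast
      thus ?thesis using Pjoin sbc[OF al x] sbc[OF al y] True by (simp add: \<phi>_def)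
    qed (simp add: \<phi>_def)
    moreover have "xs \<in> \<phi> k (meet L k x y) \<longleftrightarrow> xs \<in> \<phi> k x \<inter> \<phi> k y" for xs
    proof (cases "xs \<in> tuples W k")
      case True
      have al: "al k xs \<in> substs k n" using al_in True W_def by blast
      have "sb L k n (al k xs) (meet L k x y) = meet L n (sb L k n (al k xs) x) (sb L k n (al k xs) y)"
        using a2 al x y unfolding ax2_def by blast
      thus ?thesis using Pmeet sbc[OF al x] sbc[OF al y] True by (simp add: \<phi>_def)
    qed (simp add: \<phi>_def)
    ultimately show ?thesis by blast
  qed
  have B: "\<phi> k (bot L k) = {} \<and> \<phi> k (top L k) = tuples W k" for k
  proof -
    have "\<And>xs. xs \<in> tuples W k \<Longrightarrow> sb L k n (al k xs) (bot L k) = bot L n \<and> sb L k n (al k xs) (top L k) = top L n"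
      using a2 al_in W_def unfolding ax2_def by blast
    thus ?thesis using botP topP by (auto simp: \<phi>_def)
  qed
  have E: "ex_rel W k (\<phi> (Suc k) x) \<subseteq> \<phi> k (ex L k x)" if x: "x \<in> car L (Suc k)" for k x
  proof
    fix xs assume "xs \<in> ex_rel W k (\<phi> (Suc k) x)"
    then obtain y where xs: "xs \<in> tuples W k" and y: "xs @ [y] \<in> \<phi> (Suc k) x" by (auto simp: ex_rel_def)
    define c where "c = restrict id {0..<k}"
    have c: "c \<in> substs k (Suc k)" by (auto simp: c_def)
    have ex: "ex L k x \<in> car L k" using cl x unfolding pe_closed_def by blast
    have "x = meet L (Suc k) x (sb L k (Suc k) c (ex L k x))" using a8 x unfolding ax8_def c_def by blast
    hence "\<phi> (Suc k) x = \<phi> (Suc k) x \<inter> \<phi> (Suc k) (sb L k (Suc k) c (ex L k x))"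
      using J[OF x sbc[OF c ex]] by metis
    hence "xs @ [y] \<in> subst_rel W k (Suc k) c (\<phi> k (ex L k x))" using y S[OF c ex] by blast
    moreover have "subst_tuple k c (xs @ [y]) = xs" using xs
      by (auto simp: subst_tuple_def c_def tuples_def nth_append intro!: nth_equalityI)
    ultimately show "xs \<in> \<phi> k (ex L k x)" by (simp add: subst_rel_def)
  qed
  have AM: "almost_morphism L W \<phi>" unfolding almost_morphism_def
    using S J B E by (auto simp: \<phi>_def)
  define ids :: "(nat \<times> 'a) set list" where "ids = map enc [0..<n]"
  have ids: "ids \<in> tuples W n" by (auto simp: ids_def W_def tuples_def)
  have "al n ids = restrict id {0..<n}" by (auto simp: al_def ids_def)
  hence "\<And>x. x \<in> car L n \<Longrightarrow> ids \<in> \<phi> n x \<longleftrightarrow> x \<in> P"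
    using a4 ids unfolding ax4_def \<phi>_def by auto
  hence "\<phi> n r \<noteq> \<phi> n s" using rP sP r s by blast
  thus ?thesis using AM by blast
qed

theorem lemma4p9:
  fixes L :: "'a pe_alg" and n :: nat and r s :: 'a
  assumes "pe_closed L" and "ax1 L" and "ax2 L" and "ax3 L" and "ax4 L" and "ax8 L"
    and "r \<in> car L n" and "s \<in> car L n" and "r \<noteq> s"
  shows "\<exists>(W :: (nat \<times> 'a) set set) (\<phi> :: nat \<Rightarrow> 'a \<Rightarrow> (nat \<times> 'a) set list set).
           almost_morphism L W \<phi> \<and> \<phi> n r \<noteq> \<phi> n s"
proof (cases "r = meet L n r s")
  case False
  show ?thesis by (rule main_aux[OF assms(1-8) False])
next
  case True
  have ms: "meet L n r s = meet L n s r" using assms(2,7,8) unfolding ax1_def by blast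
  have ne: "s \<noteq> meet L n s r"
  proof
    assume "s = meet L n s r"
    hence "r = s" using True ms by simp
    thus False using assms(9) by simp
  qed
  obtain W :: "(nat \<times> 'a) set set" and \<phi> :: "nat \<Rightarrow> 'a \<Rightarrow> (nat \<times> 'a) set list set"
    where h: "almost_morphism L W \<phi>" "\<phi> n s \<noteq> \<phi> n r"
    using main_aux[OF assms(1-6) assms(8) assms(7) ne] by blast
  show ?thesis
    by (rule exI[of _ W], rule exI[of _ \<phi>]) (use h in auto)
qed

end
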